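(* Let $m, n_0, n_1$ be positive integers with $m \geq 4$, $\gcd(n_0, n_1) = 1$ and $\gcd(n_1, m) = 1$, and put $n(\lambda) = n_0 + n_1\lambda$. Consider the equation $$\frac{m}{n_0 + n_1\lambda} = \frac{1}{x(\lambda)} + \frac{1}{y(\lambda)} + \frac{1}{z(\lambda)} \qquad (\ast)$$ in polynomials $x(\lambda), y(\lambda), z(\lambda)$ with positive integer coefficients, required to hold identically in $\lambda$. Then $(\ast)$ has such a solution if and only if there exist positive integers $l, k, s, r$ such that (i) $n_1 = l(mk-1)$, (ii) $s n_1 = kl + r n_0$, (iii) $skl/r$ is a positive integer. In that case $$x(\lambda) = k\,n(\lambda),\qquad z(\lambda) = \frac{kl}{r}(s + r\lambda),\qquad y(\lambda) = n(\lambda)(s + r\lambda)$$ is a solution. Moreover, every solution of $(\ast)$ in polynomials with positive integer coefficients is, up to a permutation of $x, y, z$, of this form for some positive integers $l, k, s, r$ satisfying (i)–(iii).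
   Context: $\lambda$ is an indeterminate. *)

theory Defs
  imports "HOL-Computational_Algebra.Polynomial" "HOL-Library.Multiset"
begin

definition pos_int_poly :: "int poly \<Rightarrow> bool" where
  "pos_int_poly p \<longleftrightarrow> p \<noteq> 0 \<and> (\<forall>i\<le>degree p. coeff p i > 0)"

text \<open>The equation m / n(lambda) = 1/x + 1/y + 1/z identically in lambda, for nonzero
  polynomials x, y, z, with denominators cleared: m x y z = n (yz + xz + xy).\<close>
definition ES_poly_solution :: "int \<Rightarrow> int poly \<Rightarrow> int poly \<Rightarrow> int poly \<Rightarrow> int poly \<Rightarrow> bool" where
  "ES_poly_solution m n x y z \<longleftrightarrow>
     pos_int_poly x \<and> pos_int_poly y \<and> pos_int_poly z \<and>
     smult m (x * y * z) = n * (y * z + x * z + x * y)"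

definition ES_conds :: "int \<Rightarrow> int \<Rightarrow> int \<Rightarrow> int \<Rightarrow> int \<Rightarrow> int \<Rightarrow> int \<Rightarrow> bool" where
  "ES_conds m n0 n1 l k s r \<longleftrightarrow>
     l > 0 \<and> k > 0 \<and> s > 0 \<and> r > 0 \<and>
     n1 = l * (m * k - 1) \<and>
     s * n1 = k * l + r * n0 \<and>
     r dvd s * k * l \<and> s * k * l div r > 0"

end

theory Submission
  imports Defs
begin

lemma coprime_dvd_aux: fixes a b c :: int assumes "gcd a b = 1" "a dvd b * c" shows "a dvd c"
  using assms by (metis coprime_dvd_mult_right_iff coprime_iff_gcd_eq_1)

lemma gcd_sq_aux: fixes a b :: int assumes "gcd a b = 1" shows "gcd a (b^2) = 1" "gcd (b^2) a = 1"
  using assms unfolding coprime_iff_gcd_eq_1[symmetric] by (simp_all add: coprime_commute)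

lemma G:
  fixes m n0 n1 x0 x1 z0 z1 y0 y1 y2 :: int
  assumes es: "smult m ([:x0,x1:] * [:y0,y1,y2:] * [:z0,z1:]) = [:n0,n1:] * ([:y0,y1,y2:]*[:z0,z1:] + [:x0,x1:]*[:z0,z1:] + [:x0,x1:]*[:y0,y1,y2:])"
   and pos: "m \<ge> 4" "n0 > 0" "n1 > 0" "x0 > 0" "x1 > 0" "z0 > 0" "z1 > 0" "y0 > 0" "y1 > 0" "y2 > 0"
   and g1: "gcd n0 n1 = 1" and g2: "gcd n1 m = 1"
   and hx: "x0 * n1 = x1 * n0"
  shows "\<exists>l k s r. ES_conds m n0 n1 l k s r \<and>
     {#[:x0,x1:], [:y0,y1,y2:], [:z0,z1:]#} = {#smult k [:n0, n1:], [:n0, n1:] * [:s, r:], [:s * k * l div r, k * l:]#}"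
proof -
  have c4: "m*x1*y2*z1 = n1*(y2*z1 + x1*y2)"
   and c3: "m*(x0*y2*z1 + x1*y1*z1 + x1*y2*z0) = n0*(y2*z1 + x1*y2) + n1*(y1*z1+y2*z0+x1*z1+x0*y2+x1*y1)"
   and c2: "m*(x0*y1*z1 + x0*y2*z0 + x1*y0*z1 + x1*y1*z0) = n0*(y1*z1+y2*z0+x1*z1+x0*y2+x1*y1) + n1*(y0*z1+y1*z0+x0*z1+x1*z0+x0*y1+x1*y0)"
   and c1: "m*(x0*y0*z1 + x0*y1*z0 + x1*y0*z0) = n0*(y0*z1+y1*z0+x0*z1+x1*z0+x0*y1+x1*y0) + n1*(y0*z0+x0*z0+x0*y0)"
   and c0: "m*x0*y0*z0 = n0*(y0*z0+x0*z0+x0*y0)"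
    using es by (simp_all add: algebra_simps)
  have "n1 dvd x1 * n0" using hx by (metis dvd_triv_right)
  then have "n1 dvd x1" using g1 by (metis coprime_dvd_aux gcd.commute mult.commute)
  then obtain k where k: "x1 = k * n1" by (metis dvd_def mult.commute)
  have "n1*(x0 - k*n0) = 0" using hx k by algebra
  then have xk0: "x0 = k * n0" using pos by simp
  have kpos: "k > 0" using k pos by (simp add: zero_less_mult_iff)
  have "m*1 \<le> m*k" by (rule mult_left_mono) (use kpos pos in auto)
  then have mk: "m*k - 1 > 0" using pos by linarith
  have z1k: "(m*k-1)*z1 = k*n1"
  proof -
    have "y2 * n1 * ((m*k-1)*z1 - k*n1) = 0" using c4 unfolding k by (simp add: algebra_simps)
    then show ?thesis using pos by simp
  qed
  define c where "c = (m*k-1)*z0 - k*n0"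
  have "n1*(c*y2 - k*n1*z1) = 0" using c3 z1k unfolding k xk0 c_def by algebra
  then have cy2: "c*y2 = k*n1*z1" using pos by simp
  have "n0*(c*y0 - k*n0*z0) = 0" using c0 z1k unfolding k xk0 c_def by algebra
  then have cy0: "c*y0 = k*n0*z0" using pos by simp
  have "n0*(c*y1 - k*(n0*z1+n1*z0)) = 0" using c1 cy0 z1k unfolding k xk0 c_def by algebra
  then have cy1: "c*y1 = k*(n0*z1+n1*z0)" using pos by simp
  have cpos: "c > 0" using cy2 pos kpos by (metis mult_pos_pos zero_less_mult_pos2)
  have "c*(y0*n1^2 - y1*n0*n1 + y2*n0^2) = 0" using cy0 cy1 cy2 by algebra
  then have yr: "y0*n1^2 - y1*n0*n1 + y2*n0^2 = 0" using cpos by simp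
  have "n0^2 * y2 = n1 * (y1*n0 - y0*n1)" using yr by algebra
  then have "n1 dvd n0^2 * y2" by simp
  moreover have "gcd n1 (n0^2) = 1" using g1 gcd_sq_aux by (simp add: gcd.commute)
  ultimately have "n1 dvd y2" by (metis coprime_dvd_aux)
  then obtain r where r: "y2 = n1 * r" by (auto simp: dvd_def)
  have "n1^2 * y0 = n0 * (y1*n1 - y2*n0)" using yr by algebra
  then have "n0 dvd n1^2 * y0" by simp
  moreover have "gcd n0 (n1^2) = 1" using g1 gcd_sq_aux by simp
  ultimately have "n0 dvd y0" by (metis coprime_dvd_aux)
  then obtain s where s: "y0 = n0 * s" by (auto simp: dvd_def)
  have "n0*n1*(y1 - s*n1 - r*n0) = 0" using yr r s by algebra
  then have ys1: "y1 = s*n1 + r*n0" using pos by simp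
  have rpos: "r > 0" using r pos by (simp add: zero_less_mult_iff)
  have spos: "s > 0" using s pos by (simp add: zero_less_mult_iff)
  have "n0*(c*s - k*z0) = 0" using cy0 s by algebra
  then have cs: "c*s = k*z0" using pos by simp
  have "n1*(c*r - k*z1) = 0" using cy2 r by algebra
  then have cr: "c*r = k*z1" using pos by simp
  have "gcd (m*k-1) k = 1"
  proof -
    have "gcd (m*k-1) k dvd m*k" using gcd_dvd2 dvd_mult by blast
    then have "gcd (m*k-1) k dvd m*k - (m*k-1)" using gcd_dvd1 dvd_diff by blast
    then have "gcd (m*k-1) k dvd 1" by simp
    then show ?thesis by simp
  qed
  moreover have "(m*k-1) dvd k * n1" using z1k by (metis dvd_triv_left)
  ultimately have "(m*k-1) dvd n1" by (metis coprime_dvd_aux)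
  then obtain l where l: "n1 = l*(m*k-1)" by (auto simp: dvd_def mult.commute)
  have lpos: "l > 0" using l pos mk by (simp add: zero_less_mult_iff)
  have "(m*k-1)*(z1 - k*l) = 0" using z1k l by algebra
  then have z1l: "z1 = k*l" using mk by simp
  have "c*(s*n1 - (k*l + r*n0)) = 0" using cs cr l z1l unfolding c_def by algebra
  then have cond2: "s*n1 = k*l + r*n0" using cpos by simp
  have "c*(r*z0 - s*k*l) = 0" using cs cr z1l by algebra
  then have rz0: "s*k*l = r*z0" using cpos by simp
  have cond3: "r dvd s*k*l" using rz0 by simp
  have cond4: "s*k*l div r = z0" using rz0 rpos by simp
  have "ES_conds m n0 n1 l k s r"
    unfolding ES_conds_def using lpos kpos spos rpos l cond2 cond3 cond4 pos by simp
  moreover have "[:x0,x1:] = smult k [:n0,n1:]" using k xk0 by (simp add: mult.commute)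
  moreover have "[:y0,y1,y2:] = [:n0, n1:] * [:s, r:]" using s ys1 r by (simp add: algebra_simps)
  moreover have "[:z0,z1:] = [:s * k * l div r, k * l:]" using cond4 z1l by simp
  ultimately show ?thesis by metis
qed

lemma X:
  fixes m n0 n1 x0 x1 z0 z1 y0 y1 y2 :: int
  assumes es: "smult m ([:x0,x1:] * [:y0,y1,y2:] * [:z0,z1:]) = [:n0,n1:] * ([:y0,y1,y2:]*[:z0,z1:] + [:x0,x1:]*[:z0,z1:] + [:x0,x1:]*[:y0,y1,y2:])"
   and pos: "m \<ge> 4" "n0 > 0" "n1 > 0" "x0 > 0" "x1 > 0" "z0 > 0" "z1 > 0" "y0 > 0" "y1 > 0" "y2 > 0"
   and g2: "gcd n1 m = 1"
   and hxz: "x0 * z1 = x1 * z0"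
  shows False
proof -
  have c4: "m*x1*y2*z1 = n1*(y2*z1 + x1*y2)"
   and c3: "m*(x0*y2*z1 + x1*y1*z1 + x1*y2*z0) = n0*(y2*z1 + x1*y2) + n1*(y1*z1+y2*z0+x1*z1+x0*y2+x1*y1)"
   and c2: "m*(x0*y1*z1 + x0*y2*z0 + x1*y0*z1 + x1*y1*z0) = n0*(y1*z1+y2*z0+x1*z1+x0*y2+x1*y1) + n1*(y0*z1+y1*z0+x0*z1+x1*z0+x0*y1+x1*y0)"
   and c1: "m*(x0*y0*z1 + x0*y1*z0 + x1*y0*z0) = n0*(y0*z1+y1*z0+x0*z1+x1*z0+x0*y1+x1*y0) + n1*(y0*z0+x0*z0+x0*y0)"
   and c0: "m*x0*y0*z0 = n0*(y0*z0+x0*z0+x0*y0)"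
    using es by (simp_all add: algebra_simps)
  define a where "a = gcd x0 x1"
  have apos: "a > 0" using pos unfolding a_def by simp
  define q0 where "q0 = x0 div a"
  define q1 where "q1 = x1 div a"
  have xq0: "x0 = a*q0" unfolding q0_def a_def by simp
  have xq1: "x1 = a*q1" unfolding q1_def a_def by simp
  have "coprime (x0 div gcd x0 x1) (x1 div gcd x0 x1)" by (rule div_gcd_coprime) (use pos in auto)
  then have gq: "gcd q0 q1 = 1" unfolding q0_def q1_def a_def by (simp only: coprime_iff_gcd_eq_1)
  have q0pos: "q0 > 0" using xq0 apos pos by (simp add: zero_less_mult_iff)
  have q1pos: "q1 > 0" using xq1 apos pos by (simp add: zero_less_mult_iff)
  have "a*(q0*z1 - q1*z0) = 0" using hxz xq0 xq1 by algebra
  then have qz: "q0*z1 = q1*z0" using apos by simp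
  then have "q1 dvd q0*z1" by simp
  moreover have "gcd q1 q0 = 1" using gq by (simp add: gcd.commute)
  ultimately have "q1 dvd z1" by (metis coprime_dvd_aux)
  then obtain b where zb1: "z1 = q1*b" by (auto simp: dvd_def)
  have "q1*(z0 - q0*b) = 0" using qz zb1 by algebra
  then have zb0: "z0 = q0*b" using q1pos by simp
  have bpos: "b > 0" using zb1 q1pos pos by (simp add: zero_less_mult_iff)
  define P where "P = m*a*b*q1 - (a+b)*n1"
  define e where "e = m*a*b*q0 - (a+b)*n0"
  define D where "D = n1*q0 - n0*q1"
  have "q1*y2*q1*P = 0" using c4 unfolding P_def xq0 xq1 zb0 zb1 by algebra
  then have P0: "P = 0" using q1pos pos by simp
  have "q0*(e*y0 - a*b*n0*q0) = 0" using c0 unfolding e_def xq0 xq1 zb0 zb1 by algebra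
  then have ey0: "e*y0 = a*b*n0*q0" using q0pos by simp
  have "q1*(e*y2 - a*b*n1*q1) = 0" using c3 c4 P0 unfolding P_def e_def xq0 xq1 zb0 zb1 by algebra
  then have ey2: "e*y2 = a*b*n1*q1" using q1pos by simp
  have "q0*(e*y1 - a*b*(n0*q1+n1*q0)) = 0" using c1 ey0 P0 unfolding P_def e_def xq0 xq1 zb0 zb1 by algebra
  then have ey1: "e*y1 = a*b*(n0*q1+n1*q0)" using q0pos by simp
  have en: "e*n1 = m*a*b*D" using P0 unfolding P_def e_def D_def by algebra
  have "a*b*(m*D*y2 - n1^2*q1) = 0" using en ey2 by algebra
  then have md2: "m*D*y2 = n1^2*q1" using apos bpos by simp
  have "a*b*(m*D*y1 - n1*(n0*q1+n1*q0)) = 0" using en ey1 by algebra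
  then have md1: "m*D*y1 = n1*(n0*q1+n1*q0)" using apos bpos by simp
  have gm1: "gcd m (n1^2) = 1" using g2 gcd_sq_aux by (simp add: gcd.commute)
  have "m dvd n1^2*q1" using md2 by (metis dvd_triv_left mult.assoc)
  then have mq1: "m dvd q1" using gm1 by (metis coprime_dvd_aux)
  have "m dvd n1*(n0*q1+n1*q0)" using md1 by (metis dvd_triv_left mult.assoc)
  then have "m dvd n0*q1+n1*q0" using g2 by (metis coprime_dvd_aux gcd.commute)
  moreover have "m dvd n0*q1" using mq1 by simp
  ultimately have "m dvd n1*q0" by (metis dvd_add_right_iff)
  then have mq0: "m dvd q0" using g2 by (metis coprime_dvd_aux gcd.commute)
  have "m dvd gcd q0 q1" using mq0 mq1 by simp
  then have "m dvd 1" using gq by simp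
  then show False using pos by (simp add: zdvd_imp_le)
qed

lemma I2:
  fixes m n0 n1 x0 x1 z0 z1 y0 y1 y2 :: int
  assumes es: "smult m ([:x0,x1:] * [:y0,y1,y2:] * [:z0,z1:]) = [:n0,n1:] * ([:y0,y1,y2:]*[:z0,z1:] + [:x0,x1:]*[:z0,z1:] + [:x0,x1:]*[:y0,y1,y2:])"
   and pos: "m \<ge> 4" "n0 > 0" "n1 > 0" "x0 > 0" "x1 > 0" "z0 > 0" "z1 > 0" "y0 > 0" "y1 > 0" "y2 > 0"
   and g1: "gcd n0 n1 = 1" and g2: "gcd n1 m = 1"
  shows "\<exists>l k s r. ES_conds m n0 n1 l k s r \<and>
     {#[:x0,x1:], [:y0,y1,y2:], [:z0,z1:]#} = {#smult k [:n0, n1:], [:n0, n1:] * [:s, r:], [:s * k * l div r, k * l:]#}"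
proof -
  have c4: "m*x1*y2*z1 = n1*(y2*z1 + x1*y2)"
   and c3: "m*(x0*y2*z1 + x1*y1*z1 + x1*y2*z0) = n0*(y2*z1 + x1*y2) + n1*(y1*z1+y2*z0+x1*z1+x0*y2+x1*y1)"
   and c2: "m*(x0*y1*z1 + x0*y2*z0 + x1*y0*z1 + x1*y1*z0) = n0*(y1*z1+y2*z0+x1*z1+x0*y2+x1*y1) + n1*(y0*z1+y1*z0+x0*z1+x1*z0+x0*y1+x1*y0)"
   and c1: "m*(x0*y0*z1 + x0*y1*z0 + x1*y0*z0) = n0*(y0*z1+y1*z0+x0*z1+x1*z0+x0*y1+x1*y0) + n1*(y0*z0+x0*z0+x0*y0)"
   and c0: "m*x0*y0*z0 = n0*(y0*z0+x0*z0+x0*y0)"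
    using es by (simp_all add: algebra_simps)
  define w0 where "w0 = m*x0*z0 - n0*(x0+z0)"
  define w1 where "w1 = m*(x0*z1+x1*z0) - n0*(x1+z1) - n1*(x0+z0)"
  define w2 where "w2 = m*x1*z1 - n1*(x1+z1)"
  have "y2*w2 = 0" using c4 unfolding w2_def by algebra
  then have w20: "w2 = 0" using pos by simp
  have w1y2: "w1*y2 = n1*x1*z1" using c3 w20 unfolding w1_def w2_def by algebra
  have w1pos: "w1 > 0" using w1y2 pos by (metis mult_pos_pos zero_less_mult_pos2)
  show ?thesis
  proof (cases "w0*n1 = w1*n0")
    case True
    have "m*(x0*n1 - x1*n0)*(z0*n1 - z1*n0) = 0" using True w20 unfolding w0_def w1_def w2_def by algebra
    then have "x0*n1 = x1*n0 \<or> z0*n1 = z1*n0" using pos by simp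
    then show ?thesis
    proof
      assume "x0*n1 = x1*n0"
      then show ?thesis using G[OF es pos g1 g2] by blast
    next
      assume hz: "z0*n1 = z1*n0"
      have es': "smult m ([:z0,z1:] * [:y0,y1,y2:] * [:x0,x1:]) = [:n0,n1:] * ([:y0,y1,y2:]*[:x0,x1:] + [:z0,z1:]*[:x0,x1:] + [:z0,z1:]*[:y0,y1,y2:])"
      proof -
        have e1: "[:z0,z1:] * [:y0,y1,y2:] * [:x0,x1:] = [:x0,x1:] * [:y0,y1,y2:] * [:z0,z1:]"
          by (simp only: ac_simps)
        have e2: "[:y0,y1,y2:]*[:x0,x1:] + [:z0,z1:]*[:x0,x1:] + [:z0,z1:]*[:y0,y1,y2:] = [:y0,y1,y2:]*[:z0,z1:] + [:x0,x1:]*[:z0,z1:] + [:x0,x1:]*[:y0,y1,y2:]"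
          by (simp only: ac_simps)
        show ?thesis unfolding e1 e2 by (rule es)
      qed
      have pos': "m \<ge> 4" "n0 > 0" "n1 > 0" "z0 > 0" "z1 > 0" "x0 > 0" "x1 > 0" "y0 > 0" "y1 > 0" "y2 > 0"
        using pos by auto
      obtain l k s r where "ES_conds m n0 n1 l k s r" and
        "{#[:z0,z1:], [:y0,y1,y2:], [:x0,x1:]#} = {#smult k [:n0, n1:], [:n0, n1:] * [:s, r:], [:s * k * l div r, k * l:]#}"
        using G[OF es' pos' g1 g2 hz] by blast
      moreover have "{#[:z0,z1:], [:y0,y1,y2:], [:x0,x1:]#} = {#[:x0,x1:], [:y0,y1,y2:], [:z0,z1:]#}"
        by (simp add: add_mset_commute)
      ultimately show ?thesis by metis
    qed
  next
    case False
    have hn: "n0*w1 - n1*w0 \<noteq> 0" using False by (simp add: algebra_simps)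
    have d3: "y2*w1 = n1*x1*z1" using w1y2 by (simp add: mult.commute)
    have d2: "y1*w1 + y2*w0 = n0*x1*z1 + n1*(x0*z1+x1*z0)"
      using c2 c3 w20 unfolding w0_def w1_def w2_def by algebra
    have d1: "y0*w1 + y1*w0 = n0*(x0*z1+x1*z0) + n1*x0*z0"
      using c1 c2 w20 unfolding w0_def w1_def w2_def by algebra
    have d0: "y0*w0 = n0*x0*z0"
      using c0 unfolding w0_def by algebra
    have "(n0*w1 - n1*w0)*(x0*w1 - x1*w0)*(z0*w1 - z1*w0)
        = (n0*x0*z0)*w1^3 - (n0*(x0*z1+x1*z0) + n1*x0*z0)*w0*w1^2 + (n0*x1*z1 + n1*(x0*z1+x1*z0))*w0^2*w1 - (n1*x1*z1)*w0^3"
      by (simp add: algebra_simps power2_eq_square power3_eq_cube)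
    also have "\<dots> = (y0*w0)*w1^3 - (y0*w1 + y1*w0)*w0*w1^2 + (y1*w1 + y2*w0)*w0^2*w1 - (y2*w1)*w0^3"
      by (simp only: d0 d1 d2 d3)
    also have "\<dots> = 0" by (simp add: algebra_simps power2_eq_square power3_eq_cube)
    finally have "(n0*w1 - n1*w0)*(x0*w1 - x1*w0)*(z0*w1 - z1*w0) = 0" .
    then have h1: "x0*w1 - x1*w0 = 0 \<or> z0*w1 - z1*w0 = 0" using hn by simp
    have h2: "m*(x0*w1 - x1*w0)*(z0*w1 - z1*w0) - (n0*w1 - n1*w0)*((x0*w1 - x1*w0) + (z0*w1 - z1*w0)) = 0"
      using w20 unfolding w0_def w1_def w2_def by algebra
    have "x0*w1 - x1*w0 = 0 \<and> z0*w1 - z1*w0 = 0"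
      using h1 h2 hn by auto
    then have "w1*(x0*z1 - x1*z0) = 0" by algebra
    then have "x0*z1 = x1*z0" using w1pos by simp
    then show ?thesis using X[OF es pos g2] by blast
  qed
qed

lemma ES_eq_swap12: fixes X Y Z N :: "int poly"
  assumes "smult m (X*Y*Z) = N*(Y*Z+X*Z+X*Y)" shows "smult m (Y*X*Z) = N*(X*Z+Y*Z+Y*X)"
  using assms by (simp add: ac_simps)

lemma ES_eq_swap13: fixes X Y Z N :: "int poly"
  assumes "smult m (X*Y*Z) = N*(Y*Z+X*Z+X*Y)" shows "smult m (Z*Y*X) = N*(Y*X+Z*X+Z*Y)"
  using assms by (simp add: ac_simps)

lemma L2:
  fixes m n0 n1 k k' z0 z1 :: int
  assumes pos: "m \<ge> 4" "n0 > 0" "n1 > 0" "k > 0" "k' > 0"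
   and g1: "gcd n0 n1 = 1"
   and e0: "(m*k*k' - k - k')*z0 = k*k'*n0" and e1: "(m*k*k' - k - k')*z1 = k*k'*n1"
  shows False
proof -
  define t where "t = m*k*k' - k - k'"
  have "t dvd k*k'*n0" using e0 unfolding t_def by (metis dvd_triv_left)
  moreover have "t dvd k*k'*n1" using e1 unfolding t_def by (metis dvd_triv_left)
  ultimately have "t dvd gcd (k*k'*n0) (k*k'*n1)" by simp
  also have "gcd (k*k'*n0) (k*k'*n1) = k*k'"
    using gcd_mult_distrib_int[of "k*k'" n0 n1] g1 pos by (simp add: abs_mult)
  finally have td: "t dvd k*k'" .
  have kk: "k*k' > 0" using pos by simp
  have "t \<le> k*k'" using td kk zdvd_imp_le by blast
  moreover have "k*k' \<ge> k" using pos by (simp add: mult_le_cancel_left1)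
  moreover have "k*k' \<ge> k'" using pos by (simp add: mult_le_cancel_right1)
  moreover have "m*(k*k') \<ge> 4*(k*k')" using pos kk by (intro mult_right_mono) auto
  ultimately show False unfolding t_def using kk by (simp add: mult.assoc)
qed

lemma L1:
  fixes m n0 n1 x0 x1 z0 z1 y0 y1 :: int
  assumes es: "smult m ([:x0,x1:] * [:y0,y1:] * [:z0,z1:]) = [:n0,n1:] * ([:y0,y1:]*[:z0,z1:] + [:x0,x1:]*[:z0,z1:] + [:x0,x1:]*[:y0,y1:])"
   and pos: "m \<ge> 4" "n0 > 0" "n1 > 0" "x0 > 0" "x1 > 0" "z0 > 0" "z1 > 0" "y0 > 0" "y1 > 0"
   and g1: "gcd n0 n1 = 1"
   and hx: "x0 * n1 = x1 * n0"
  shows False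
proof -
  have b3: "m*x1*y1*z1 = n1*(y1*z1 + x1*z1 + x1*y1)"
   and b2: "m*(x0*y1*z1 + x1*y0*z1 + x1*y1*z0) = n0*(y1*z1 + x1*z1 + x1*y1) + n1*(y0*z1+y1*z0+x0*z1+x1*z0+x0*y1+x1*y0)"
   and b1: "m*(x0*y0*z1 + x0*y1*z0 + x1*y0*z0) = n0*(y0*z1+y1*z0+x0*z1+x1*z0+x0*y1+x1*y0) + n1*(y0*z0+x0*z0+x0*y0)"
   and b0: "m*x0*y0*z0 = n0*(y0*z0+x0*z0+x0*y0)"
    using es by (simp_all add: algebra_simps)
  have "n1 dvd x1 * n0" using hx by (metis dvd_triv_right)
  then have "n1 dvd x1" using g1 by (metis coprime_dvd_aux gcd.commute mult.commute)
  then obtain k where k: "x1 = k * n1" by (metis dvd_def mult.commute)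
  have "n1*(x0 - k*n0) = 0" using hx k by algebra
  then have xk0: "x0 = k * n0" using pos by simp
  have kpos: "k > 0" using k pos by (simp add: zero_less_mult_iff)
  have "m*1 \<le> m*k" by (rule mult_left_mono) (use kpos pos in auto)
  then have mk: "m*k - 1 > 0" using pos by linarith
  have "n1*(m*k*y1*z1 - (y1*z1 + k*n1*(y1+z1))) = 0" using b3 unfolding k xk0 by algebra
  then have q2: "m*k*y1*z1 = y1*z1 + k*n1*(y1+z1)" using pos by simp
  have "n0*(m*k*y0*z0 - (y0*z0 + k*n0*(y0+z0))) = 0" using b0 unfolding k xk0 by algebra
  then have q0: "m*k*y0*z0 = y0*z0 + k*n0*(y0+z0)" using pos by simp
  have "n1*(m*k*(y0*z1+y1*z0) - (y0*z1+y1*z0 + k*(n0*(y1+z1) + n1*(y0+z0)))) = 0"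
    using b2 q2 unfolding k xk0 by algebra
  then have q1: "m*k*(y0*z1+y1*z0) = y0*z1+y1*z0 + k*(n0*(y1+z1) + n1*(y0+z0))" using pos by simp
  have "(m*k-1)*(y0*n1 - y1*n0)*(z0*n1 - z1*n0) = 0" using q0 q1 q2 by algebra
  then have "y0*n1 = y1*n0 \<or> z0*n1 = z1*n0" using mk by simp
  then show False
  proof
    assume hy: "y0*n1 = y1*n0"
    have "n1 dvd y1 * n0" using hy by (metis dvd_triv_right)
    then have "n1 dvd y1" using g1 by (metis coprime_dvd_aux gcd.commute mult.commute)
    then obtain k' where k': "y1 = k' * n1" by (metis dvd_def mult.commute)
    have "n1*(y0 - k'*n0) = 0" using hy k' by algebra
    then have yk0: "y0 = k' * n0" using pos by simp
    have k'pos: "k' > 0" using k' pos by (simp add: zero_less_mult_iff)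
    have "n1*((m*k*k' - k - k')*z1 - k*k'*n1) = 0" using q2 unfolding k' yk0 by algebra
    then have e1: "(m*k*k' - k - k')*z1 = k*k'*n1" using pos by simp
    have "n0*((m*k*k' - k - k')*z0 - k*k'*n0) = 0" using q0 unfolding k' yk0 by algebra
    then have e0: "(m*k*k' - k - k')*z0 = k*k'*n0" using pos by simp
    show False using L2[OF pos(1-3) kpos k'pos g1 e0 e1] .
  next
    assume hz: "z0*n1 = z1*n0"
    have "n1 dvd z1 * n0" using hz by (metis dvd_triv_right)
    then have "n1 dvd z1" using g1 by (metis coprime_dvd_aux gcd.commute mult.commute)
    then obtain k' where k': "z1 = k' * n1" by (metis dvd_def mult.commute)
    have "n1*(z0 - k'*n0) = 0" using hz k' by algebra
    then have zk0: "z0 = k' * n0" using pos by simp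
    have k'pos: "k' > 0" using k' pos by (simp add: zero_less_mult_iff)
    have "n1*((m*k*k' - k - k')*y1 - k*k'*n1) = 0" using q2 unfolding k' zk0 by algebra
    then have e1: "(m*k*k' - k - k')*y1 = k*k'*n1" using pos by simp
    have "n0*((m*k*k' - k - k')*y0 - k*k'*n0) = 0" using q0 unfolding k' zk0 by algebra
    then have e0: "(m*k*k' - k - k')*y0 = k*k'*n0" using pos by simp
    show False using L2[OF pos(1-3) kpos k'pos g1 e0 e1] .
  qed
qed

lemma I1:
  fixes m n0 n1 x0 x1 z0 z1 y0 y1 :: int
  assumes es: "smult m ([:x0,x1:] * [:y0,y1:] * [:z0,z1:]) = [:n0,n1:] * ([:y0,y1:]*[:z0,z1:] + [:x0,x1:]*[:z0,z1:] + [:x0,x1:]*[:y0,y1:])"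
   and pos: "m \<ge> 4" "n0 > 0" "n1 > 0" "x0 > 0" "x1 > 0" "z0 > 0" "z1 > 0" "y0 > 0" "y1 > 0"
   and g1: "gcd n0 n1 = 1"
  shows False
proof -
  have b3: "m*x1*y1*z1 = n1*(y1*z1 + x1*z1 + x1*y1)"
   and b2: "m*(x0*y1*z1 + x1*y0*z1 + x1*y1*z0) = n0*(y1*z1 + x1*z1 + x1*y1) + n1*(y0*z1+y1*z0+x0*z1+x1*z0+x0*y1+x1*y0)"
   and b1: "m*(x0*y0*z1 + x0*y1*z0 + x1*y0*z0) = n0*(y0*z1+y1*z0+x0*z1+x1*z0+x0*y1+x1*y0) + n1*(y0*z0+x0*z0+x0*y0)"
   and b0: "m*x0*y0*z0 = n0*(y0*z0+x0*z0+x0*y0)"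
    using es by (simp_all add: algebra_simps)
  have "m*(x0*n1 - x1*n0)*(y0*n1 - y1*n0)*(z0*n1 - z1*n0) = 0"
    using b0 b1 b2 b3 by algebra
  then have "x0*n1 = x1*n0 \<or> y0*n1 = y1*n0 \<or> z0*n1 = z1*n0" using pos by simp
  then show False
  proof (elim disjE)
    assume "x0*n1 = x1*n0" then show False using L1[OF es pos g1] by blast
  next
    assume h: "y0*n1 = y1*n0"
    show False using L1[OF ES_eq_swap12[OF es] pos(1-3) pos(8,9) pos(6,7) pos(4,5) g1 h] .
  next
    assume h: "z0*n1 = z1*n0"
    show False using L1[OF ES_eq_swap13[OF es] pos(1-3) pos(6,7) pos(4,5) pos(8,9) g1 h] .
  qed
qed

lemma I3:
  fixes m n0 n1 x0 x1 z0 z1 y0 y1 y2 y3 :: int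
  assumes eq: "[:y0,y1,y2,y3:] * [:w0,w1,w2:] = [:n0,n1:] * [:x0,x1:] * [:z0,z1:]"
   and w0: "w0 = m*x0*z0 - n0*(x0+z0)"
   and w1: "w1 = m*(x0*z1+x1*z0) - n0*(x1+z1) - n1*(x0+z0)"
   and w2: "w2 = m*x1*z1 - n1*(x1+z1)"
   and pos: "m > 0" "n1 > 0" "x1 > 0" "z1 > 0" "y3 > 0"
  shows False
proof -
  have e5: "y3*w2 = 0" and e4: "y2*w2 + y3*w1 = 0" and e3: "y1*w2+y2*w1+y3*w0 = n1*x1*z1"
    using eq by (simp_all add: algebra_simps)
  have "w2 = 0" using e5 pos by simp
  then have "w1 = 0" using e4 pos by simp
  have "w0 > 0" using e3 `w2 = 0` `w1 = 0` pos
    by (metis add_0 mult_zero_right mult_pos_pos zero_less_mult_pos)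
  have id: "w0*m*x1^2*z1^2 + n1^2*(x0*z1-x1*z0)^2 = 0"
    using w0 w1 w2 `w2 = 0` `w1 = 0` by algebra
  have "w0*m*x1^2*z1^2 > 0" using `w0 > 0` pos by simp
  moreover have "n1^2*(x0*z1-x1*z0)^2 \<ge> 0" by simp
  ultimately show False using id by linarith
qed

lemma ES_to_W: fixes X Y Z N :: "int poly"
  assumes "smult m (X*Y*Z) = N*(Y*Z+X*Z+X*Y)" shows "Y*(smult m (X*Z) - N*X - N*Z) = N*X*Z"
proof -
  have "Y*(smult m (X*Z) - N*X - N*Z) = smult m (X*Y*Z) - N*(Y*Z + X*Y)" by (simp add: algebra_simps)
  also have "\<dots> = N*X*Z" unfolding assms by (simp add: algebra_simps)
  finally show ?thesis .
qed

lemma W_explicit: fixes m n0 n1 x0 x1 z0 z1 :: int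
  shows "smult m ([:x0,x1:]*[:z0,z1:]) - [:n0,n1:]*[:x0,x1:] - [:n0,n1:]*[:z0,z1:]
     = [:m*x0*z0 - n0*(x0+z0), m*(x0*z1+x1*z0) - n0*(x1+z1) - n1*(x0+z0), m*x1*z1 - n1*(x1+z1):]"
  by (simp add: algebra_simps)



lemma lead_pos: "pos_int_poly p \<Longrightarrow> lead_coeff p > 0"
  unfolding pos_int_poly_def by auto

lemma deg_add_pos:
  fixes p q :: "int poly"
  assumes "lead_coeff p > 0" "lead_coeff q > 0"
  shows "degree (p+q) = max (degree p) (degree q) \<and> lead_coeff (p+q) > 0"
proof (cases "degree p < degree q")
  case True
  then show ?thesis using assms by (simp add: degree_add_eq_right coeff_eq_0)
next
  case False
  show ?thesis
  proof (cases "degree q < degree p")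
    case True
    then show ?thesis using assms by (simp add: degree_add_eq_left coeff_eq_0)
  next
    case False
    then have eq: "degree p = degree q" using \<open>\<not> degree p < degree q\<close> by simp
    have c: "coeff (p+q) (degree p) > 0" using assms eq by simp
    have "degree (p+q) \<le> degree p" using eq degree_add_le by (metis max.idem degree_add_le_max)
    moreover have "degree (p+q) \<ge> degree p" using c by (simp add: le_degree)
    ultimately show ?thesis using c eq by simp
  qed
qed

lemma deg_mult_pos:
  fixes p q :: "int poly"
  assumes "lead_coeff p > 0" "lead_coeff q > 0"
  shows "degree (p*q) = degree p + degree q \<and> lead_coeff (p*q) > 0"
proof -
  have "p \<noteq> 0" "q \<noteq> 0" using assms by auto
  have "lead_coeff (p*q) = lead_coeff p * lead_coeff q" by (rule lead_coeff_mult)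
  moreover have "degree (p*q) = degree p + degree q" using \<open>p \<noteq> 0\<close> \<open>q \<noteq> 0\<close> by (rule degree_mult_eq)
  ultimately show ?thesis using assms by (simp only: mult_pos_pos)
qed

lemma lin_form: fixes p :: "int poly" assumes "degree p = 1" shows "p = [:coeff p 0, coeff p 1:]"
proof (rule poly_eqI)
  fix n show "coeff p n = coeff [:coeff p 0, coeff p 1:] n"
    using assms coeff_eq_0[of p n] by (cases n) (auto simp: coeff_pCons numeral_2_eq_2 numeral_3_eq_3 split: nat.split)
qed

lemma quad_form: fixes p :: "int poly" assumes "degree p = 2" shows "p = [:coeff p 0, coeff p 1, coeff p 2:]"
proof (rule poly_eqI)
  fix n show "coeff p n = coeff [:coeff p 0, coeff p 1, coeff p 2:] n"
    using assms coeff_eq_0[of p n] by (cases n) (auto simp: coeff_pCons numeral_2_eq_2 numeral_3_eq_3 split: nat.split)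
qed

lemma cub_form: fixes p :: "int poly" assumes "degree p = 3" shows "p = [:coeff p 0, coeff p 1, coeff p 2, coeff p 3:]"
proof (rule poly_eqI)
  fix n show "coeff p n = coeff [:coeff p 0, coeff p 1, coeff p 2, coeff p 3:] n"
    using assms coeff_eq_0[of p n] by (cases n) (auto simp: coeff_pCons numeral_2_eq_2 numeral_3_eq_3 split: nat.split)
qed

lemma ES_swap12: "ES_poly_solution m n x y z \<Longrightarrow> ES_poly_solution m n y x z"
  unfolding ES_poly_solution_def by (simp add: ac_simps)
lemma ES_swap23: "ES_poly_solution m n x y z \<Longrightarrow> ES_poly_solution m n x z y"
  unfolding ES_poly_solution_def by (simp add: ac_simps)
lemma ES_swap13: "ES_poly_solution m n x y z \<Longrightarrow> ES_poly_solution m n z y x"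
  unfolding ES_poly_solution_def by (simp add: ac_simps)

lemma Dmin:
  assumes es: "ES_poly_solution m [:n0,n1:] x y z" and pos: "m > 0" "n1 > 0"
  shows "degree x \<ge> 1 \<and> degree y \<ge> 1 \<and> degree z \<ge> 1 \<and> (degree x = 1 \<or> degree y = 1 \<or> degree z = 1)"
proof -
  have lx: "lead_coeff x > 0" and ly: "lead_coeff y > 0" and lz: "lead_coeff z > 0"
    using es lead_pos unfolding ES_poly_solution_def by auto
  have eq: "smult m (x * y * z) = [:n0,n1:] * (y * z + x * z + x * y)"
    using es unfolding ES_poly_solution_def by auto
  have yz: "degree (y*z) = degree y + degree z \<and> lead_coeff (y*z) > 0" using deg_mult_pos[OF ly lz] .
  have xz: "degree (x*z) = degree x + degree z \<and> lead_coeff (x*z) > 0" using deg_mult_pos[OF lx lz] .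
  have xy: "degree (x*y) = degree x + degree y \<and> lead_coeff (x*y) > 0" using deg_mult_pos[OF lx ly] .
  have s1: "degree (y*z + x*z) = max (degree y + degree z) (degree x + degree z) \<and> lead_coeff (y*z + x*z) > 0"
    using deg_add_pos[OF conjunct2[OF yz] conjunct2[OF xz]] unfolding conjunct1[OF yz] conjunct1[OF xz] .
  have s2: "degree (y*z + x*z + x*y) = max (max (degree y + degree z) (degree x + degree z)) (degree x + degree y) \<and> lead_coeff (y*z + x*z + x*y) > 0"
    using deg_add_pos[OF conjunct2[OF s1] conjunct2[OF xy]] unfolding conjunct1[OF s1] conjunct1[OF xy] .
  have ln: "lead_coeff [:n0,n1:] > 0" "degree [:n0,n1:] = 1" using pos by auto
  have r: "degree ([:n0,n1:] * (y*z + x*z + x*y)) = 1 + max (max (degree y + degree z) (degree x + degree z)) (degree x + degree y)"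
    using conjunct1[OF deg_mult_pos[OF ln(1) conjunct2[OF s2]]] unfolding conjunct1[OF s2] ln(2) .
  have xyz: "degree (x*y*z) = degree x + degree y + degree z"
    using conjunct1[OF deg_mult_pos[OF conjunct2[OF xy] lz]] unfolding conjunct1[OF xy] .
  have l: "degree (smult m (x*y*z)) = degree x + degree y + degree z" using xyz pos by simp
  have "degree x + degree y + degree z = 1 + max (max (degree y + degree z) (degree x + degree z)) (degree x + degree y)"
    using l r eq by simp
  then show ?thesis by (simp add: max_def split: if_splits)
qed

lemma ES_to_U: fixes X Y Z N :: "int poly"
  assumes "smult m (X*Y*Z) = N*(Y*Z+X*Z+X*Y)" shows "(smult m X - N)*Y*Z = N*X*(Y+Z)"
proof -
  have "(smult m X - N)*Y*Z = smult m (X*Y*Z) - N*(Y*Z)" by (simp add: algebra_simps)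
  also have "\<dots> = N*X*(Y+Z)" unfolding assms by (simp add: algebra_simps)
  finally show ?thesis .
qed

lemma D2:
  assumes es: "ES_poly_solution m [:n0,n1:] x y z" and pos: "m \<ge> 4" "n1 > 0"
    and g2: "gcd n1 m = 1" and dx: "degree x = 1"
  shows "degree y = 1 \<or> degree z = 1"
proof -
  have lx: "lead_coeff x > 0" and ly: "lead_coeff y > 0" and lz: "lead_coeff z > 0"
    using es lead_pos unfolding ES_poly_solution_def by auto
  have eq: "smult m (x * y * z) = [:n0,n1:] * (y * z + x * z + x * y)"
    using es unfolding ES_poly_solution_def by auto
  define x0 where "x0 = coeff x 0"
  define x1 where "x1 = coeff x 1"
  have xe: "x = [:x0,x1:]" unfolding x0_def x1_def using lin_form[OF dx] .
  have x1pos: "x1 > 0" using lx dx unfolding x1_def by simp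
  have ne: "m*x1 - n1 \<noteq> 0"
  proof
    assume "m*x1 - n1 = 0"
    then have "m dvd n1" by (metis dvd_triv_left eq_iff_diff_eq_0)
    then have "m dvd gcd n1 m" by simp
    then have "m dvd 1" using g2 by simp
    then show False using pos by (simp add: zdvd_imp_le)
  qed
  have ue: "smult m x - [:n0,n1:] = [:m*x0 - n0, m*x1 - n1:]" unfolding xe by simp
  have du: "degree (smult m x - [:n0,n1:]) = 1" unfolding ue using ne by simp
  have u0: "smult m x - [:n0,n1:] \<noteq> 0" using du by auto
  have "(smult m x - [:n0,n1:])*y*z = [:n0,n1:]*x*(y+z)" using ES_to_U[OF eq] .
  moreover have "degree ((smult m x - [:n0,n1:])*y*z) = 1 + degree y + degree z"
  proof -
    have y0: "y \<noteq> 0" and z0: "z \<noteq> 0" using ly lz by auto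
    have uy: "(smult m x - [:n0,n1:])*y \<noteq> 0" using u0 y0 by simp
    have "degree ((smult m x - [:n0,n1:])*y) = 1 + degree y" using degree_mult_eq[OF u0 y0] du by simp
    then show ?thesis using degree_mult_eq[OF uy z0] by simp
  qed
  moreover have "degree ([:n0,n1:]*x*(y+z)) = 1 + 1 + max (degree y) (degree z)"
  proof -
    have a: "degree (y+z) = max (degree y) (degree z) \<and> lead_coeff (y+z) > 0" using deg_add_pos[OF ly lz] .
    have ln: "lead_coeff [:n0,n1:] > 0" "degree [:n0,n1:] = 1" using pos by auto
    have b: "degree ([:n0,n1:]*x) = 1 + 1 \<and> lead_coeff ([:n0,n1:]*x) > 0"
      using deg_mult_pos[OF ln(1) lx] unfolding ln(2) dx .
    show ?thesis using conjunct1[OF deg_mult_pos[OF conjunct2[OF b] conjunct2[OF a]]] unfolding conjunct1[OF a] conjunct1[OF b] .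
  qed
  ultimately have "1 + degree y + degree z = 1 + 1 + max (degree y) (degree z)" by simp
  then show ?thesis by (simp add: max_def split: if_splits)
qed

lemma pos_coeff: "pos_int_poly p \<Longrightarrow> i \<le> degree p \<Longrightarrow> coeff p i > 0"
  unfolding pos_int_poly_def by auto

lemma Core2:
  assumes es: "ES_poly_solution m [:n0,n1:] x y z"
    and pos: "m \<ge> 4" "n0 > 0" "n1 > 0" and g1: "gcd n0 n1 = 1" and g2: "gcd n1 m = 1"
    and dx: "degree x = 1" and dz: "degree z = 1"
  shows "\<exists>l k s r. ES_conds m n0 n1 l k s r \<and>
     {#x, y, z#} = {#smult k [:n0, n1:], [:n0, n1:] * [:s, r:], [:s * k * l div r, k * l:]#}"
proof -
  have px: "pos_int_poly x" and py: "pos_int_poly y" and pz: "pos_int_poly z"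
    using es unfolding ES_poly_solution_def by auto
  have eq: "smult m (x * y * z) = [:n0,n1:] * (y * z + x * z + x * y)"
    using es unfolding ES_poly_solution_def by auto
  define x0 where "x0 = coeff x 0"
  define x1 where "x1 = coeff x 1"
  define z0 where "z0 = coeff z 0"
  define z1 where "z1 = coeff z 1"
  have xe: "x = [:x0,x1:]" unfolding x0_def x1_def using lin_form[OF dx] .
  have ze: "z = [:z0,z1:]" unfolding z0_def z1_def using lin_form[OF dz] .
  have xp: "x0 > 0" "x1 > 0" unfolding x0_def x1_def using pos_coeff[OF px] dx by auto
  have zp: "z0 > 0" "z1 > 0" unfolding z0_def z1_def using pos_coeff[OF pz] dz by auto
  have dy1: "degree y \<ge> 1" using Dmin[OF es] pos by auto
  have weq: "y * (smult m (x*z) - [:n0,n1:]*x - [:n0,n1:]*z) = [:n0,n1:]*x*z" using ES_to_W[OF eq] .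
  define W where "W = smult m (x*z) - [:n0,n1:]*x - [:n0,n1:]*z"
  have n0: "[:n0,n1:] \<noteq> 0" "x \<noteq> 0" "z \<noteq> 0" "y \<noteq> 0" using pos px py pz unfolding pos_int_poly_def by auto
  have dnxz: "degree ([:n0,n1:]*x*z) = 3"
  proof -
    have "degree ([:n0,n1:]*x) = 2" using degree_mult_eq[OF n0(1) n0(2)] dx pos by simp
    moreover have "[:n0,n1:]*x \<noteq> 0" using n0 by (metis mult_eq_0_iff)
    ultimately show ?thesis using degree_mult_eq[of "[:n0,n1:]*x" z] n0 dz by simp
  qed
  have W0: "W \<noteq> 0"
  proof
    assume "W = 0"
    then have "[:n0,n1:]*x*z = 0" using weq unfolding W_def[symmetric] by (metis mult_zero_right)
    then show False using n0 by (metis mult_eq_0_iff)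
  qed
  have "degree y + degree W = 3" using weq degree_mult_eq[OF n0(4) W0] dnxz unfolding W_def[symmetric] by simp
  then have dy3: "degree y \<le> 3" by simp
  define y0 where "y0 = coeff y 0"
  define y1 where "y1 = coeff y 1"
  define y2 where "y2 = coeff y 2"
  define y3 where "y3 = coeff y 3"
  have We: "W = [:m*x0*z0 - n0*(x0+z0), m*(x0*z1+x1*z0) - n0*(x1+z1) - n1*(x0+z0), m*x1*z1 - n1*(x1+z1):]"
    unfolding W_def xe ze by (rule W_explicit)
  consider "degree y = 1" | "degree y = 2" | "degree y = 3" using dy1 dy3 by linarith
  then show ?thesis
  proof cases
    case 1
    have ye: "y = [:y0,y1:]" unfolding y0_def y1_def using lin_form[OF 1] .
    have yp: "y0 > 0" "y1 > 0" unfolding y0_def y1_def using pos_coeff[OF py] 1 by auto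
    have "smult m ([:x0,x1:] * [:y0,y1:] * [:z0,z1:]) = [:n0,n1:] * ([:y0,y1:]*[:z0,z1:] + [:x0,x1:]*[:z0,z1:] + [:x0,x1:]*[:y0,y1:])"
      using eq unfolding xe ye ze .
    then have False using I1[OF _ pos xp zp yp g1] by blast
    then show ?thesis ..
  next
    case 2
    have ye: "y = [:y0,y1,y2:]" unfolding y0_def y1_def y2_def using quad_form[OF 2] .
    have yp: "y0 > 0" "y1 > 0" "y2 > 0" unfolding y0_def y1_def y2_def using pos_coeff[OF py] 2 by auto
    have "smult m ([:x0,x1:] * [:y0,y1,y2:] * [:z0,z1:]) = [:n0,n1:] * ([:y0,y1,y2:]*[:z0,z1:] + [:x0,x1:]*[:z0,z1:] + [:x0,x1:]*[:y0,y1,y2:])"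
      using eq unfolding xe ye ze .
    from I2[OF this pos xp(1,2) zp(1,2) yp g1 g2] show ?thesis unfolding xe ye ze .
  next
    case 3
    have ye: "y = [:y0,y1,y2,y3:]" unfolding y0_def y1_def y2_def y3_def using cub_form[OF 3] .
    have yp: "y3 > 0" unfolding y3_def using pos_coeff[OF py] 3 by auto
    have "[:y0,y1,y2,y3:] * [:m*x0*z0 - n0*(x0+z0), m*(x0*z1+x1*z0) - n0*(x1+z1) - n1*(x0+z0), m*x1*z1 - n1*(x1+z1):] = [:n0,n1:] * [:x0,x1:] * [:z0,z1:]"
      using weq unfolding W_def[symmetric] We unfolding ye xe ze .
    moreover have "m > 0" using pos by simp
    ultimately have False using I3[OF _ refl refl refl _ pos(3) xp(2) zp(2) yp] by blast
    then show ?thesis ..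
  qed
qed

lemma pip2: fixes a b :: int assumes "a > 0" "b > 0" shows "pos_int_poly [:a,b:]"
  unfolding pos_int_poly_def using assms by (auto simp: le_Suc_eq coeff_pCons split: nat.split)

lemma pip3: fixes a b c :: int assumes "a > 0" "b > 0" "c > 0" shows "pos_int_poly [:a,b,c:]"
  unfolding pos_int_poly_def using assms
  by (auto simp: le_Suc_eq coeff_pCons numeral_2_eq_2 split: nat.split)

lemma construct:
  assumes c: "ES_conds m n0 n1 l k s r" and pos: "n0 > 0" "n1 > 0"
  shows "ES_poly_solution m [:n0,n1:] (smult k [:n0,n1:]) ([:n0,n1:]*[:s,r:]) [:s*k*l div r, k*l:]"
proof -
  have l: "l > 0" and k: "k > 0" and s: "s > 0" and r: "r > 0"
    and c1: "n1 = l * (m * k - 1)" and c2: "s * n1 = k * l + r * n0"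
    and c3: "r dvd s * k * l" and c4: "s * k * l div r > 0"
    using c unfolding ES_conds_def by auto
  define z0 where "z0 = s*k*l div r"
  have rz: "r*z0 = s*k*l" unfolding z0_def using c3 by simp
  have z0p: "z0 > 0" unfolding z0_def using c4 .
  have xe: "smult k [:n0,n1:] = [:k*n0, k*n1:]" by simp
  have ye: "[:n0,n1:]*[:s,r:] = [:n0*s, n0*r + n1*s, n1*r:]" by (simp add: algebra_simps)
  have px: "pos_int_poly [:k*n0, k*n1:]" using pip2 k pos by simp
  have py: "pos_int_poly [:n0*s, n0*r + n1*s, n1*r:]" using s r pos by (intro pip3) (simp_all add: add_pos_pos)
  have pz: "pos_int_poly [:z0, k*l:]" using pip2 z0p k l by simp
  define N where "N = [:n0,n1:]"
  define Q where "Q = [:s,r:]"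
  define Z where "Z = [:z0, k*l:]"
  have h1: "[:r:]*Z = [:k:]*[:l:]*Q" unfolding Z_def Q_def using rz by (simp add: algebra_simps)
  have h2: "([:m:]*[:k:] - 1)*[:l:]*Q = [:k:]*[:l:] + [:r:]*N"
    unfolding Q_def N_def using c1 c2 by (simp add: algebra_simps) (intro conjI; algebra)
  have "[:r:]*([:m:]*(([:k:]*N) * (N*Q) * Z) - N*((N*Q)*Z + ([:k:]*N)*Z + ([:k:]*N)*(N*Q))) = 0"
    using h1 h2 by algebra
  then have "[:m:]*(([:k:]*N) * (N*Q) * Z) = N*((N*Q)*Z + ([:k:]*N)*Z + ([:k:]*N)*(N*Q))"
    using r by simp
  then have "smult m (smult k N * (N*Q) * Z) = N*((N*Q)*Z + smult k N*Z + smult k N*(N*Q))"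
    by (simp add: mult.commute)
  then show ?thesis unfolding ES_poly_solution_def N_def[symmetric] Q_def[symmetric] z0_def[symmetric] Z_def[symmetric]
    using px py pz unfolding xe[symmetric] ye[symmetric] N_def Q_def Z_def by simp
qed

lemma Core1:
  assumes es: "ES_poly_solution m [:n0,n1:] x y z"
    and pos: "m \<ge> 4" "n0 > 0" "n1 > 0" and g1: "gcd n0 n1 = 1" and g2: "gcd n1 m = 1"
    and dx: "degree x = 1"
  shows "\<exists>l k s r. ES_conds m n0 n1 l k s r \<and>
     {#x, y, z#} = {#smult k [:n0, n1:], [:n0, n1:] * [:s, r:], [:s * k * l div r, k * l:]#}"
proof -
  from D2[OF es pos(1) pos(3) g2 dx] show ?thesis
  proof
    assume "degree y = 1"
    from Core2[OF ES_swap23[OF es] pos g1 g2 dx this]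
    show ?thesis by (simp add: add_mset_commute)
  next
    assume "degree z = 1"
    from Core2[OF es pos g1 g2 dx this] show ?thesis .
  qed
qed

lemma classify:
  assumes es: "ES_poly_solution m [:n0,n1:] x y z"
    and pos: "m \<ge> 4" "n0 > 0" "n1 > 0" and g1: "gcd n0 n1 = 1" and g2: "gcd n1 m = 1"
  shows "\<exists>l k s r. ES_conds m n0 n1 l k s r \<and>
     {#x, y, z#} = {#smult k [:n0, n1:], [:n0, n1:] * [:s, r:], [:s * k * l div r, k * l:]#}"
proof -
  have "degree x = 1 \<or> degree y = 1 \<or> degree z = 1" using Dmin[OF es] pos by auto
  then show ?thesis
  proof (elim disjE)
    assume "degree x = 1" then show ?thesis using Core1[OF es pos g1 g2] by blast
  next
    assume "degree y = 1"
    from Core1[OF ES_swap12[OF es] pos g1 g2 this] show ?thesis by (simp add: add_mset_commute)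
  next
    assume "degree z = 1"
    from Core1[OF ES_swap13[OF es] pos g1 g2 this] show ?thesis by (simp add: add_mset_commute)
  qed
qed

theorem mainTheorem1:
  fixes m n0 n1 :: int
  assumes "m \<ge> 4" and "n0 > 0" and "n1 > 0"
    and "gcd n0 n1 = 1" and "gcd n1 m = 1"
  shows "((\<exists>x y z. ES_poly_solution m [:n0, n1:] x y z) \<longleftrightarrow>
            (\<exists>l k s r. ES_conds m n0 n1 l k s r))
       \<and> (\<forall>l k s r. ES_conds m n0 n1 l k s r \<longrightarrow>
            ES_poly_solution m [:n0, n1:]
              (smult k [:n0, n1:]) ([:n0, n1:] * [:s, r:]) [:s * k * l div r, k * l:])
       \<and> (\<forall>x y z. ES_poly_solution m [:n0, n1:] x y z \<longrightarrow>
            (\<exists>l k s r. ES_conds m n0 n1 l k s r \<and>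
               {#x, y, z#} = {#smult k [:n0, n1:], [:n0, n1:] * [:s, r:], [:s * k * l div r, k * l:]#}))"
proof (intro conjI)
  show B: "\<forall>l k s r. ES_conds m n0 n1 l k s r \<longrightarrow>
            ES_poly_solution m [:n0, n1:]
              (smult k [:n0, n1:]) ([:n0, n1:] * [:s, r:]) [:s * k * l div r, k * l:]"
    using construct[OF _ assms(2,3)] by blast
  show C: "\<forall>x y z. ES_poly_solution m [:n0, n1:] x y z \<longrightarrow>
            (\<exists>l k s r. ES_conds m n0 n1 l k s r \<and>
               {#x, y, z#} = {#smult k [:n0, n1:], [:n0, n1:] * [:s, r:], [:s * k * l div r, k * l:]#})"
    using classify[OF _ assms] by blast
  show "(\<exists>x y z. ES_poly_solution m [:n0, n1:] x y z) \<longleftrightarrow> (\<exists>l k s r. ES_conds m n0 n1 l k s r)"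
    using B C by blast
qed


end
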